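(* Let $\sigma$ be a symmetry of a pseudo-Boolean formula with support $\{x_{i_1},\dots,x_{i_k}\}$, $i_1<\dots<i_k$, and write $p_j=x_{i_j}$, $q_j=\sigma(x_{i_j})$. From the circuit constraints for $\sigma$ (defined below) together with $t_k\ge1$, the symmetry-breaking clauses $s_1+\bar p_1\ge1$; $s_{j+1}+\bar s_j+\bar p_{j+1}\ge1$ ($1\le j\le k-2$); $s_1+q_1\ge1$; $s_{j+1}+\bar s_j+q_{j+1}\ge1$ ($1\le j\le k-2$); $q_1+\bar p_1\ge1$; $\bar s_j+q_{j+1}+\bar p_{j+1}\ge1$ ($1\le j\le k-1$) can be derived using $O(k)$ RUP steps and cutting planes steps.
   Context: Literals are $x$ or $\bar x=1-x$; PB constraints $\sum_i c_i\ell_i\ge A$; $\neg(\sum c_i\ell_i\ge A)\doteq\sum c_i\bar\ell_i\ge\sum c_i-A+1$. A symmetry $\sigma$ of a formula $F$ is a permutation of literals with $\sigma(\bar\ell)=\overline{\sigma(\ell)}$ and finite support $\{x:\sigma(x)\ne x\}$ such that applying $\sigma$ to $F$ yields $F$ syntactically. Circuit constraints for $\sigma$ (fresh variables $s_1..s_{k-1}$, $t_1..t_k$): $\bar s_1+p_1+\bar q_1\ge1$; $2s_1+\bar p_1+q_1\ge2$; for $1\le j\le k-2$: $3\bar s_{j+1}+2s_j+p_{j+1}+\bar q_{j+1}\ge3$, $2s_{j+1}+2\bar s_j+\bar p_{j+1}+q_{j+1}\ge2$; $\bar t_1+q_1+\bar p_1\ge1$; $2t_1+\bar q_1+p_1\ge2$;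 for $1\le j\le k-1$: $4\bar t_{j+1}+3t_j+\bar s_j+q_{j+1}+\bar p_{j+1}\ge4$, $3t_{j+1}+3\bar t_j+s_j+\bar q_{j+1}+p_{j+1}\ge3$. A cutting planes step derives a new constraint from a bounded number of available constraints and literal axioms using addition, positive multiplication, division with rounding up, saturation ($\sum c_i\ell_i\ge A\mapsto\sum\min(c_i,A)\ell_i\ge A$) and weakening. A RUP step derives $D$ if unit propagation on the available constraints together with $\neg D$ reaches a conflict (unit propagation: a constraint with negative slack $\sum_{i:\rho(\ell_i)\ne0}c_i-A$ under partial assignment $\rho$ is a conflict; an unassigned literal whose coefficient exceeds the slack is set to true). *)

theory Defs
  imports Main
begin

datatype 'v lit = Pos 'v | Neg 'v

fun neg_lit :: "'v lit \<Rightarrow> 'v lit" where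
  "neg_lit (Pos v) = Neg v" | "neg_lit (Neg v) = Pos v"

fun map_lit :: "('v \<Rightarrow> 'w) \<Rightarrow> 'v lit \<Rightarrow> 'w lit" where
  "map_lit f (Pos v) = Pos (f v)" | "map_lit f (Neg v) = Neg (f v)"

text \<open>A PB constraint is stored canonically as a linear inequality
  \<open>\<Sum>_v a v * x_v \<ge> B\<close> over the 0/1 variables (with \<open>\<bar>x\<close> read as \<open>1 - x\<close>).
  This representation is unique, so "syntactic equality" of constraints
  (after the usual normalisation \<open>c x + d \<bar>x = ...\<close>) is plain equality.\<close>
type_synonym 'v pbc = "('v \<Rightarrow> int) \<times> int"

definition supp :: "'v pbc \<Rightarrow> 'v set" where
  "supp C = {v. fst C v \<noteq> 0}"

definition lits :: "'v set \<Rightarrow> 'v lit set" where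
  "lits S = Pos ` S \<union> Neg ` S"

fun lit_sign :: "'v lit \<Rightarrow> 'v \<Rightarrow> int" where
  "lit_sign (Pos u) v = (if u = v then 1 else 0)"
| "lit_sign (Neg u) v = (if u = v then -1 else 0)"

fun neg_part :: "int \<Rightarrow> 'v lit \<Rightarrow> int" where
  "neg_part c (Pos u) = 0" | "neg_part c (Neg u) = c"

definition mk_pbc :: "(int \<times> 'v lit) list \<Rightarrow> int \<Rightarrow> 'v pbc" where
  "mk_pbc ts A = ((\<lambda>v. sum_list (map (\<lambda>(c, l). c * lit_sign l v) ts)),
                  A - sum_list (map (\<lambda>(c, l). neg_part c l) ts))"

fun ncoef :: "'v pbc \<Rightarrow> 'v lit \<Rightarrow> int" where
  "ncoef C (Pos v) = max 0 (fst C v)"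
| "ncoef C (Neg v) = max 0 (- fst C v)"

definition ndeg :: "'v pbc \<Rightarrow> int" where
  "ndeg C = snd C + (\<Sum>v\<in>supp C. max 0 (- fst C v))"

text \<open>Negation: \<open>\<not>(\<Sum> c_i \<ell>_i \<ge> A) = \<Sum> c_i \<bar>\<ell>_i \<ge> \<Sum> c_i - A + 1\<close>, i.e.
  \<open>\<Sum> a_v x_v \<le> B - 1\<close>.\<close>
definition pb_neg :: "'v pbc \<Rightarrow> 'v pbc" where
  "pb_neg C = ((\<lambda>v. - fst C v), 1 - snd C)"

definition lit_axiom :: "'v lit \<Rightarrow> 'v pbc" where
  "lit_axiom l = mk_pbc [(1, l)] 0"

definition pb_add :: "'v pbc \<Rightarrow> 'v pbc \<Rightarrow> 'v pbc" where
  "pb_add C D = ((\<lambda>v. fst C v + fst D v), snd C + snd D)"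

definition pb_mult :: "int \<Rightarrow> 'v pbc \<Rightarrow> 'v pbc" where
  "pb_mult c C = ((\<lambda>v. c * fst C v), c * snd C)"

definition cdiv :: "int \<Rightarrow> int \<Rightarrow> int" where
  "cdiv a d = - ((- a) div d)"   \<comment> \<open>\<open>\<lceil>a/d\<rceil>\<close> for \<open>d > 0\<close>\<close>

definition pb_div :: "int \<Rightarrow> 'v pbc \<Rightarrow> 'v pbc" where
  "pb_div d C = (let a' = (\<lambda>v. sgn (fst C v) * cdiv \<bar>fst C v\<bar> d) in
     (a', cdiv (ndeg C) d - (\<Sum>v\<in>supp C. max 0 (- a' v))))"

definition pb_sat :: "'v pbc \<Rightarrow> 'v pbc" where
  "pb_sat C = (let A = ndeg C; a' = (\<lambda>v. sgn (fst C v) * min \<bar>fst C v\<bar> (max 0 A)) in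
     (a', A - (\<Sum>v\<in>supp C. max 0 (- a' v))))"

definition pb_weaken :: "'v \<Rightarrow> 'v pbc \<Rightarrow> 'v pbc" where
  "pb_weaken v C = ((fst C)(v := 0), snd C - max 0 (fst C v))"

definition cp_step :: "'v pbc set \<Rightarrow> 'v pbc \<Rightarrow> bool" where
  "cp_step \<Gamma> C \<longleftrightarrow> (let G = \<Gamma> \<union> range lit_axiom in
     (\<exists>C1\<in>G. \<exists>C2\<in>G. C = pb_add C1 C2)
   \<or> (\<exists>C1\<in>G. \<exists>c>0. C = pb_mult c C1)
   \<or> (\<exists>C1\<in>G. \<exists>d>0. C = pb_div d C1)
   \<or> (\<exists>C1\<in>G. C = pb_sat C1)
   \<or> (\<exists>C1\<in>G. \<exists>v. C = pb_weaken v C1))"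

type_synonym 'v pasg = "'v \<Rightarrow> bool option"

fun lit_val :: "'v pasg \<Rightarrow> 'v lit \<Rightarrow> bool option" where
  "lit_val \<rho> (Pos v) = \<rho> v"
| "lit_val \<rho> (Neg v) = map_option Not (\<rho> v)"

fun assign_lit :: "'v pasg \<Rightarrow> 'v lit \<Rightarrow> 'v pasg" where
  "assign_lit \<rho> (Pos v) = \<rho>(v := Some True)"
| "assign_lit \<rho> (Neg v) = \<rho>(v := Some False)"

definition slack :: "'v pbc \<Rightarrow> 'v pasg \<Rightarrow> int" where
  "slack C \<rho> = (\<Sum>l\<in>{l \<in> lits (supp C). lit_val \<rho> l \<noteq> Some False}. ncoef C l) - ndeg C"

inductive up_reach :: "'v pbc set \<Rightarrow> 'v pasg \<Rightarrow> bool" for \<Gamma> where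
  up_empty: "up_reach \<Gamma> (\<lambda>_. None)"
| up_prop: "\<lbrakk> up_reach \<Gamma> \<rho>; C \<in> \<Gamma>; lit_val \<rho> l = None; ncoef C l > slack C \<rho> \<rbrakk>
            \<Longrightarrow> up_reach \<Gamma> (assign_lit \<rho> l)"

definition up_conflict :: "'v pbc set \<Rightarrow> bool" where
  "up_conflict \<Gamma> \<longleftrightarrow> (\<exists>\<rho>. up_reach \<Gamma> \<rho> \<and> (\<exists>C\<in>\<Gamma>. slack C \<rho> < 0))"

definition rup_step :: "'v pbc set \<Rightarrow> 'v pbc \<Rightarrow> bool" where
  "rup_step \<Gamma> D \<longleftrightarrow> finite (supp D) \<and> up_conflict (insert (pb_neg D) \<Gamma>)"

definition valid_deriv :: "'v pbc set \<Rightarrow> 'v pbc list \<Rightarrow> bool" where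
  "valid_deriv P Ds \<longleftrightarrow> (\<forall>i < length Ds.
     rup_step (P \<union> set (take i Ds)) (Ds ! i) \<or> cp_step (P \<union> set (take i Ds)) (Ds ! i))"

definition apply_lits :: "('v lit \<Rightarrow> 'w lit) \<Rightarrow> 'v pbc \<Rightarrow> 'w pbc" where
  "apply_lits \<sigma> C =
     ((\<lambda>w. \<Sum>l\<in>lits (supp C). ncoef C l * lit_sign (\<sigma> l) w),
      ndeg C - (\<Sum>l\<in>lits (supp C). neg_part (ncoef C l) (\<sigma> l)))"

definition sym_support :: "('v lit \<Rightarrow> 'v lit) \<Rightarrow> 'v set" where
  "sym_support \<sigma> = {x. \<sigma> (Pos x) \<noteq> Pos x}"

definition pb_formula :: "'v pbc set \<Rightarrow> bool" where
  "pb_formula F \<longleftrightarrow> finite F \<and> (\<forall>C\<in>F. finite (supp C))"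

definition is_symmetry :: "('v lit \<Rightarrow> 'v lit) \<Rightarrow> 'v pbc set \<Rightarrow> bool" where
  "is_symmetry \<sigma> F \<longleftrightarrow> bij \<sigma> \<and> (\<forall>l. \<sigma> (neg_lit l) = neg_lit (\<sigma> l))
     \<and> finite (sym_support \<sigma>) \<and> apply_lits \<sigma> ` F = F"

text \<open>Formula variables are \<open>X i\<close>; the fresh variables are \<open>S j\<close> and \<open>T j\<close>.\<close>
datatype var = X nat | S nat | T nat

definition circuit_constraints :: "nat \<Rightarrow> (nat \<Rightarrow> var lit) \<Rightarrow> (nat \<Rightarrow> var lit) \<Rightarrow> var pbc set" where
  "circuit_constraints k p q =
     {mk_pbc [(1, Neg (S 1)), (1, p 1), (1, neg_lit (q 1))] 1,
      mk_pbc [(2, Pos (S 1)), (1, neg_lit (p 1)), (1, q 1)] 2}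
   \<union> (\<Union>j\<in>{1..k-2}.
       {mk_pbc [(3, Neg (S (j+1))), (2, Pos (S j)), (1, p (j+1)), (1, neg_lit (q (j+1)))] 3,
        mk_pbc [(2, Pos (S (j+1))), (2, Neg (S j)), (1, neg_lit (p (j+1))), (1, q (j+1))] 2})
   \<union> {mk_pbc [(1, Neg (T 1)), (1, q 1), (1, neg_lit (p 1))] 1,
      mk_pbc [(2, Pos (T 1)), (1, neg_lit (q 1)), (1, p 1)] 2}
   \<union> (\<Union>j\<in>{1..k-1}.
       {mk_pbc [(4, Neg (T (j+1))), (3, Pos (T j)), (1, Neg (S j)), (1, q (j+1)), (1, neg_lit (p (j+1)))] 4,
        mk_pbc [(3, Pos (T (j+1))), (3, Neg (T j)), (1, Pos (S j)), (1, neg_lit (q (j+1))), (1, p (j+1))] 3})"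

definition sb_clauses :: "nat \<Rightarrow> (nat \<Rightarrow> var lit) \<Rightarrow> (nat \<Rightarrow> var lit) \<Rightarrow> var pbc set" where
  "sb_clauses k p q =
     {mk_pbc [(1, Pos (S 1)), (1, neg_lit (p 1))] 1}
   \<union> (\<Union>j\<in>{1..k-2}. {mk_pbc [(1, Pos (S (j+1))), (1, Neg (S j)), (1, neg_lit (p (j+1)))] 1})
   \<union> {mk_pbc [(1, Pos (S 1)), (1, q 1)] 1}
   \<union> (\<Union>j\<in>{1..k-2}. {mk_pbc [(1, Pos (S (j+1))), (1, Neg (S j)), (1, q (j+1))] 1})
   \<union> {mk_pbc [(1, q 1), (1, neg_lit (p 1))] 1}
   \<union> (\<Union>j\<in>{1..k-1}. {mk_pbc [(1, Neg (S j)), (1, q (j+1)), (1, neg_lit (p (j+1)))] 1})"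

end

theory Submission imports Defs begin

definition np :: "'v lit \<Rightarrow> int" where "np l = neg_part 1 l"

lemma neg_part_np: "neg_part c l = c * np l"
  by (cases l) (auto simp: np_def)
lemma np_neg[simp]: "np (neg_lit l) = 1 - np l"
  by (cases l) (auto simp: np_def)
lemma np_simps[simp]: "np (Pos v) = 0" "np (Neg v) = 1" by (auto simp: np_def)
lemma lit_sign_neg[simp]: "lit_sign (neg_lit l) v = - lit_sign l v"
  by (cases l) auto
lemma lit_sign_simps: "lit_sign (Pos u) v = of_bool (u = v)" "lit_sign (Neg u) v = - of_bool (u = v)"
  by auto

lemmas norm = pb_add_def pb_mult_def lit_axiom_def mk_pbc_def neg_part_np lit_sign_simps

lemma "pb_add (mk_pbc [(4, Neg (T (j+1))), (3, Pos (T j)), (1, Neg (S j)), (1, q), (1, neg_lit p)] 4) (pb_mult 4 (mk_pbc [(1, Pos (T (j+1)))] 1)) = mk_pbc [(3, Pos (T j)), (1, Neg (S j)), (1, q), (1, neg_lit p)] 4"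
  unfolding norm by (simp add: fun_eq_iff algebra_simps)

lemma "pb_add (mk_pbc [(3, Pos (T j)), (1, q), (1, neg_lit p)] 3) (lit_axiom (neg_lit q)) = mk_pbc [(3, Pos (T j)), (1, neg_lit p)] 2"
  unfolding norm by (simp add: fun_eq_iff algebra_simps)

lemma "pb_add (mk_pbc [(3, Pos (T j)), (1, Neg (S j)), (1, q), (1, neg_lit p)] 4) (pb_mult 3 (lit_axiom (Neg (T j)))) = mk_pbc [(1, Neg (S j)), (1, q), (1, neg_lit p)] 1"
  unfolding norm by (simp add: fun_eq_iff algebra_simps)

definition is_x :: "var lit \<Rightarrow> bool" where "is_x l \<longleftrightarrow> (\<exists>y. l = Pos (X y) \<or> l = Neg (X y))"

lemma div3: "pb_div 3 (mk_pbc [(3, Pos (T a))] 1) = mk_pbc [(1, Pos (T a))] 1"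
proof -
  have s: "supp (mk_pbc [(3, Pos (T a))] 1) = {T a}" by (auto simp: supp_def mk_pbc_def)
  show ?thesis unfolding pb_div_def ndeg_def s
    by (auto simp: mk_pbc_def cdiv_def fun_eq_iff)
qed

lemma div2a: assumes "is_x l" shows "pb_div 2 (mk_pbc [(2, Pos (S a)), (1, l)] 1) = mk_pbc [(1, Pos (S a)), (1, l)] 1"
proof -
  obtain y where "l = Pos (X y) \<or> l = Neg (X y)" using assms is_x_def by auto
  then show ?thesis
  proof
    assume l: "l = Pos (X y)"
    have s: "supp (mk_pbc [(2, Pos (S a)), (1, l)] 1) = {S a, X y}" by (auto simp: supp_def mk_pbc_def l)
    show ?thesis unfolding pb_div_def ndeg_def s
      by (auto simp: mk_pbc_def cdiv_def fun_eq_iff l)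
  next
    assume l: "l = Neg (X y)"
    have s: "supp (mk_pbc [(2, Pos (S a)), (1, l)] 1) = {S a, X y}" by (auto simp: supp_def mk_pbc_def l)
    show ?thesis unfolding pb_div_def ndeg_def s
      by (auto simp: mk_pbc_def cdiv_def fun_eq_iff l)
  qed
qed

lemma div2b: assumes "is_x l" shows "pb_div 2 (mk_pbc [(2, Pos (S (Suc a))), (2, Neg (S a)), (1, l)] 1) = mk_pbc [(1, Pos (S (Suc a))), (1, Neg (S a)), (1, l)] 1"
proof -
  obtain y where "l = Pos (X y) \<or> l = Neg (X y)" using assms is_x_def by auto
  then show ?thesis
  proof
    assume l: "l = Pos (X y)"
    have s: "supp (mk_pbc [(2, Pos (S (Suc a))), (2, Neg (S a)), (1, l)] 1) = {S (Suc a), S a, X y}" by (auto simp: supp_def mk_pbc_def l)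
    show ?thesis unfolding pb_div_def ndeg_def s
      by (auto simp: mk_pbc_def cdiv_def fun_eq_iff l)
  next
    assume l: "l = Neg (X y)"
    have s: "supp (mk_pbc [(2, Pos (S (Suc a))), (2, Neg (S a)), (1, l)] 1) = {S (Suc a), S a, X y}" by (auto simp: supp_def mk_pbc_def l)
    show ?thesis unfolding pb_div_def ndeg_def s
      by (auto simp: mk_pbc_def cdiv_def fun_eq_iff l)
  qed
qed

lemma up_reach_mono: assumes "up_reach G r" "G \<subseteq> G'" shows "up_reach G' r"
  using assms(1)
proof (induction rule: up_reach.induct)
  case up_empty show ?case by (rule up_reach.up_empty)
next
  case (up_prop \<rho> C l)
  have "C \<in> G'" using up_prop.hyps(2) assms(2) by blast
  then show ?case using up_reach.up_prop[OF up_prop.IH _ up_prop.hyps(3,4)] by blast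
qed

lemma rup_mono: assumes "rup_step G C" "G \<subseteq> G'" shows "rup_step G' C"
proof -
  from assms(1) obtain r D where f: "finite (supp C)" and u: "up_reach (insert (pb_neg C) G) r"
    and d: "D \<in> insert (pb_neg C) G" and sl: "slack D r < 0"
    unfolding rup_step_def up_conflict_def by blast
  have sub: "insert (pb_neg C) G \<subseteq> insert (pb_neg C) G'" using assms(2) by blast
  have "up_reach (insert (pb_neg C) G') r" by (rule up_reach_mono[OF u sub])
  moreover have "D \<in> insert (pb_neg C) G'" using d sub by blast
  ultimately show ?thesis unfolding rup_step_def up_conflict_def using f sl by blast
qed

lemma cp_add: "C1 \<in> G \<union> range lit_axiom \<Longrightarrow> C2 \<in> G \<union> range lit_axiom \<Longrightarrow> C = pb_add C1 C2 \<Longrightarrow> cp_step G C"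
  unfolding cp_step_def Let_def by blast
lemma cp_mult: "C1 \<in> G \<union> range lit_axiom \<Longrightarrow> c > 0 \<Longrightarrow> C = pb_mult c C1 \<Longrightarrow> cp_step G C"
  unfolding cp_step_def Let_def by blast
lemma cp_div: "C1 \<in> G \<union> range lit_axiom \<Longrightarrow> d > 0 \<Longrightarrow> C = pb_div d C1 \<Longrightarrow> cp_step G C"
  unfolding cp_step_def Let_def by blast
lemma cp_sat: "C1 \<in> G \<union> range lit_axiom \<Longrightarrow> C = pb_sat C1 \<Longrightarrow> cp_step G C"
  unfolding cp_step_def Let_def by blast
lemma cp_weaken: "C1 \<in> G \<union> range lit_axiom \<Longrightarrow> C = pb_weaken v C1 \<Longrightarrow> cp_step G C"
  unfolding cp_step_def Let_def by blast

lemma cp_mono: assumes "cp_step G C" "G \<subseteq> G'" shows "cp_step G' C"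
proof -
  let ?H = "G \<union> range lit_axiom"
  have sub: "\<And>x. x \<in> ?H \<Longrightarrow> x \<in> G' \<union> range lit_axiom" using assms(2) by blast
  from assms(1) have "(\<exists>C1\<in>?H. \<exists>C2\<in>?H. C = pb_add C1 C2)
   \<or> (\<exists>C1\<in>?H. \<exists>c>0. C = pb_mult c C1)
   \<or> (\<exists>C1\<in>?H. \<exists>d>0. C = pb_div d C1)
   \<or> (\<exists>C1\<in>?H. C = pb_sat C1)
   \<or> (\<exists>C1\<in>?H. \<exists>v. C = pb_weaken v C1)" unfolding cp_step_def Let_def .
  then show ?thesis
  proof (elim disjE)
    assume "\<exists>C1\<in>?H. \<exists>C2\<in>?H. C = pb_add C1 C2"
    then obtain C1 C2 where "C1 \<in> ?H" "C2 \<in> ?H" "C = pb_add C1 C2" by blast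
    then show ?thesis by (intro cp_add[OF sub sub])
  next
    assume "\<exists>C1\<in>?H. \<exists>c>0. C = pb_mult c C1"
    then obtain C1 c where "C1 \<in> ?H" "c > 0" "C = pb_mult c C1" by blast
    then show ?thesis by (intro cp_mult[OF sub])
  next
    assume "\<exists>C1\<in>?H. \<exists>d>0. C = pb_div d C1"
    then obtain C1 d where "C1 \<in> ?H" "d > 0" "C = pb_div d C1" by blast
    then show ?thesis by (intro cp_div[OF sub])
  next
    assume "\<exists>C1\<in>?H. C = pb_sat C1"
    then obtain C1 where "C1 \<in> ?H" "C = pb_sat C1" by blast
    then show ?thesis by (intro cp_sat[OF sub])
  next
    assume "\<exists>C1\<in>?H. \<exists>v. C = pb_weaken v C1"
    then obtain C1 v where "C1 \<in> ?H" "C = pb_weaken v C1" by blast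
    then show ?thesis by (intro cp_weaken[OF sub])
  qed
qed

lemma vd_mono: assumes "valid_deriv G Ds" "G \<subseteq> G'" shows "valid_deriv G' Ds"
  unfolding valid_deriv_def
proof (intro allI impI)
  fix i assume i: "i < length Ds"
  have sub: "G \<union> set (take i Ds) \<subseteq> G' \<union> set (take i Ds)" using assms(2) by blast
  from assms(1) i have "rup_step (G \<union> set (take i Ds)) (Ds ! i) \<or> cp_step (G \<union> set (take i Ds)) (Ds ! i)"
    unfolding valid_deriv_def by blast
  then show "rup_step (G' \<union> set (take i Ds)) (Ds ! i) \<or> cp_step (G' \<union> set (take i Ds)) (Ds ! i)"
    using rup_mono[OF _ sub] cp_mono[OF _ sub] by blast
qed

lemma vd_append: "valid_deriv P (A @ B) \<longleftrightarrow> valid_deriv P A \<and> valid_deriv (P \<union> set A) B"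
proof -
  have 1: "(\<forall>i<length (A @ B). Q i) \<longleftrightarrow> (\<forall>i<length A. Q i) \<and> (\<forall>i<length B. Q (length A + i))" for Q
    by (auto, metis add_diff_inverse_nat nat_add_left_cancel_less)
  show ?thesis unfolding valid_deriv_def 1
    by (simp add: nth_append take_append Un_assoc)
qed

lemma vd_Nil[simp]: "valid_deriv P []" by (simp add: valid_deriv_def)

lemma vd_Cons: "valid_deriv P (D # Ds) \<longleftrightarrow> (rup_step P D \<or> cp_step P D) \<and> valid_deriv (insert D P) Ds"
  using vd_append[of P "[D]" Ds] by (simp add: valid_deriv_def)

lemma memh: "x \<in> G \<Longrightarrow> G \<subseteq> G' \<Longrightarrow> x \<in> G' \<union> R" by blast

lemma ax: "lit_axiom l \<in> G \<union> range lit_axiom" by auto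

lemma is_x_neg: "is_x l \<Longrightarrow> is_x (neg_lit l)" by (auto simp: is_x_def)

definition block0 :: "(nat \<Rightarrow> var lit) \<Rightarrow> (nat \<Rightarrow> var lit) \<Rightarrow> var pbc list" where
  "block0 p q = [mk_pbc [(2, Pos (S 1)), (1, neg_lit (p 1))] 1, mk_pbc [(1, Pos (S 1)), (1, neg_lit (p 1))] 1,
                 mk_pbc [(2, Pos (S 1)), (1, q 1)] 1, mk_pbc [(1, Pos (S 1)), (1, q 1)] 1]"

lemma block0_valid:
  assumes "is_x (p 1)" "is_x (q 1)" "mk_pbc [(2, Pos (S 1)), (1, neg_lit (p 1)), (1, q 1)] 2 \<in> G"
  shows "valid_deriv G (block0 p q)"
  unfolding block0_def vd_Cons
  apply (intro conjI disjI2 vd_Nil)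
     apply (rule cp_add[OF memh[OF assms(3)] ax[of "neg_lit (q 1)"]]) apply blast
     subgoal unfolding norm by (simp add: fun_eq_iff algebra_simps)
    apply (rule cp_div[of "mk_pbc [(2, Pos (S 1)), (1, neg_lit (p 1))] 1" _ 2], simp, simp)
    apply (rule div2a[symmetric, OF is_x_neg[OF assms(1)]])
   apply (rule cp_add[OF memh[OF assms(3)] ax[of "p 1"]]) apply blast
   subgoal unfolding norm by (simp add: fun_eq_iff algebra_simps)
  apply (rule cp_div[of "mk_pbc [(2, Pos (S 1)), (1, q 1)] 1" _ 2], simp, simp)
  apply (rule div2a[symmetric, OF assms(2)])
  done

definition sblock :: "(nat \<Rightarrow> var lit) \<Rightarrow> (nat \<Rightarrow> var lit) \<Rightarrow> nat \<Rightarrow> var pbc list" where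
  "sblock p q j = [mk_pbc [(2, Pos (S (Suc j))), (2, Neg (S j)), (1, neg_lit (p (j+1)))] 1,
                   mk_pbc [(1, Pos (S (j+1))), (1, Neg (S j)), (1, neg_lit (p (j+1)))] 1,
                   mk_pbc [(2, Pos (S (Suc j))), (2, Neg (S j)), (1, q (j+1))] 1,
                   mk_pbc [(1, Pos (S (j+1))), (1, Neg (S j)), (1, q (j+1))] 1]"

lemma sblock_valid:
  assumes "is_x (p (j+1))" "is_x (q (j+1))"
    "mk_pbc [(2, Pos (S (j+1))), (2, Neg (S j)), (1, neg_lit (p (j+1))), (1, q (j+1))] 2 \<in> G"
  shows "valid_deriv G (sblock p q j)"
  unfolding sblock_def vd_Cons
  apply (intro conjI disjI2 vd_Nil)
     apply (rule cp_add[OF memh[OF assms(3)] ax[of "neg_lit (q (j+1))"]]) apply blast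
     subgoal unfolding norm by (simp add: fun_eq_iff algebra_simps)
    apply (rule cp_div[of "mk_pbc [(2, Pos (S (Suc j))), (2, Neg (S j)), (1, neg_lit (p (j+1)))] 1" _ 2], simp, simp)
    apply (simp only: Suc_eq_plus1[symmetric], rule div2b[symmetric, OF is_x_neg], use assms(1) in simp)
   apply (rule cp_add[OF memh[OF assms(3)] ax[of "p (j+1)"]]) apply blast
   subgoal unfolding norm by (simp add: fun_eq_iff algebra_simps)
  apply (rule cp_div[of "mk_pbc [(2, Pos (S (Suc j))), (2, Neg (S j)), (1, q (j+1))] 1" _ 2], simp, simp)
  apply (simp only: Suc_eq_plus1[symmetric], rule div2b[symmetric], use assms(2) in simp)
  done

definition tblock :: "(nat \<Rightarrow> var lit) \<Rightarrow> (nat \<Rightarrow> var lit) \<Rightarrow> nat \<Rightarrow> var pbc list" where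
  "tblock p q j = [mk_pbc [(4, Pos (T (j+1)))] 4,
     mk_pbc [(3, Pos (T j)), (1, Neg (S j)), (1, q (j+1)), (1, neg_lit (p (j+1)))] 4,
     mk_pbc [(3, Pos (T j)), (1, q (j+1)), (1, neg_lit (p (j+1)))] 3,
     mk_pbc [(3, Pos (T j)), (1, neg_lit (p (j+1)))] 2,
     mk_pbc [(3, Pos (T j))] 1,
     mk_pbc [(1, Pos (T j))] 1,
     mk_pbc [(3, Neg (T j))] 0,
     mk_pbc [(1, Neg (S j)), (1, q (j+1)), (1, neg_lit (p (j+1)))] 1]"

lemma tblock_valid:
  assumes "mk_pbc [(1, Pos (T (j+1)))] 1 \<in> G"
    "mk_pbc [(4, Neg (T (j+1))), (3, Pos (T j)), (1, Neg (S j)), (1, q (j+1)), (1, neg_lit (p (j+1)))] 4 \<in> G"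
  shows "valid_deriv G (tblock p q j)"
  unfolding tblock_def vd_Cons
  apply (intro conjI disjI2 vd_Nil)
         apply (rule cp_mult[of "mk_pbc [(1, Pos (T (j+1)))] 1" _ 4]) using assms(1) apply blast
          apply simp
         subgoal unfolding norm by (simp add: fun_eq_iff algebra_simps)
        apply (rule cp_add[of "mk_pbc [(4, Neg (T (j+1))), (3, Pos (T j)), (1, Neg (S j)), (1, q (j+1)), (1, neg_lit (p (j+1)))] 4"
         _ "mk_pbc [(4, Pos (T (j+1)))] 4"]) using assms(2) apply blast
         apply blast
        subgoal unfolding norm by (simp add: fun_eq_iff algebra_simps)
       apply (rule cp_add[OF _ ax[of "Pos (S j)"]]) apply blast
       subgoal unfolding norm by (simp add: fun_eq_iff algebra_simps)
      apply (rule cp_add[OF _ ax[of "neg_lit (q (j+1))"]]) apply blast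
      subgoal unfolding norm by (simp add: fun_eq_iff algebra_simps)
     apply (rule cp_add[OF _ ax[of "p (j+1)"]]) apply blast
     subgoal unfolding norm by (simp add: fun_eq_iff algebra_simps)
    apply (rule cp_div[of "mk_pbc [(3, Pos (T j))] 1" _ 3], simp, simp)
    apply (rule div3[symmetric])
   apply (rule cp_mult[OF ax[of "Neg (T j)"], of 3]) apply simp
   subgoal unfolding norm by (simp add: fun_eq_iff algebra_simps)
  apply (rule cp_add[of "mk_pbc [(3, Pos (T j)), (1, Neg (S j)), (1, q (j+1)), (1, neg_lit (p (j+1)))] 4" _ "mk_pbc [(3, Neg (T j))] 0"])
    apply blast apply blast
  subgoal unfolding norm by (simp add: fun_eq_iff algebra_simps)
  done

fun tb :: "(nat \<Rightarrow> var lit) \<Rightarrow> (nat \<Rightarrow> var lit) \<Rightarrow> nat \<Rightarrow> nat \<Rightarrow> var pbc list" where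
  "tb p q k 0 = []"
| "tb p q k (Suc n) = tb p q k n @ tblock p q (k - Suc n)"

lemma tb_inv:
  assumes k1: "k \<ge> 1" and U: "mk_pbc [(1, Pos (T k))] 1 \<in> G"
    and C: "\<And>j. 1 \<le> j \<Longrightarrow> j \<le> k - 1 \<Longrightarrow>
       mk_pbc [(4, Neg (T (j+1))), (3, Pos (T j)), (1, Neg (S j)), (1, q (j+1)), (1, neg_lit (p (j+1)))] 4 \<in> G"
  shows "n \<le> k - 1 \<Longrightarrow> valid_deriv G (tb p q k n) \<and> mk_pbc [(1, Pos (T (k - n)))] 1 \<in> G \<union> set (tb p q k n)
     \<and> length (tb p q k n) = 8 * n
     \<and> (\<forall>j. k - n \<le> j \<and> j \<le> k - 1 \<longrightarrow> mk_pbc [(1, Neg (S j)), (1, q (j+1)), (1, neg_lit (p (j+1)))] 1 \<in> set (tb p q k n))"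
proof (induction n)
  case 0
  then show ?case using U k1 by auto
next
  case (Suc n)
  define j where "j = k - Suc n"
  have j1: "1 \<le> j" "j \<le> k - 1" "j + 1 = k - n" using Suc.prems by (auto simp: j_def)
  from Suc.IH Suc.prems have IH: "valid_deriv G (tb p q k n)" "mk_pbc [(1, Pos (T (j+1)))] 1 \<in> G \<union> set (tb p q k n)"
     "length (tb p q k n) = 8 * n"
     "\<forall>j. k - n \<le> j \<and> j \<le> k - 1 \<longrightarrow> mk_pbc [(1, Neg (S j)), (1, q (j+1)), (1, neg_lit (p (j+1)))] 1 \<in> set (tb p q k n)"
    using j1 by auto
  have v: "valid_deriv (G \<union> set (tb p q k n)) (tblock p q j)"
    by (rule tblock_valid[OF IH(2)]) (use C[OF j1(1,2)] in blast)
  have "valid_deriv G (tb p q k (Suc n))" using IH(1) v by (simp add: vd_append j_def)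
  moreover have "mk_pbc [(1, Pos (T (k - Suc n)))] 1 \<in> G \<union> set (tb p q k (Suc n))"
    by (simp add: tblock_def j_def[symmetric])
  moreover have "length (tb p q k (Suc n)) = 8 * Suc n" using IH(3) by (simp add: tblock_def)
  moreover have "\<forall>i. k - Suc n \<le> i \<and> i \<le> k - 1 \<longrightarrow> mk_pbc [(1, Neg (S i)), (1, q (i+1)), (1, neg_lit (p (i+1)))] 1 \<in> set (tb p q k (Suc n))"
  proof (intro allI impI)
    fix i assume i: "k - Suc n \<le> i \<and> i \<le> k - 1"
    show "mk_pbc [(1, Neg (S i)), (1, q (i+1)), (1, neg_lit (p (i+1)))] 1 \<in> set (tb p q k (Suc n))"
    proof (cases "i = j")
      case True then show ?thesis by (simp add: tblock_def j_def[symmetric])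
    next
      case False then have "k - n \<le> i" using i j_def by auto
      then show ?thesis using IH(4) i by auto
    qed
  qed
  ultimately show ?case by blast
qed

lemma vd_concat: "(\<And>j. j \<in> set js \<Longrightarrow> valid_deriv P (f j)) \<Longrightarrow> valid_deriv P (concat (map f js))"
proof (induction js arbitrary: P)
  case Nil then show ?case by simp
next
  case (Cons a js)
  have "valid_deriv (P \<union> set (f a)) (concat (map f js))"
    using Cons.IH Cons.prems vd_mono by (metis Un_upper1 list.set_intros(2))
  then show ?case using Cons.prems by (simp add: vd_append)
qed

lemma len_concat_s: "length (concat (map (sblock p q) js)) = 4 * length js"
  by (induction js) (auto simp: sblock_def)

lemma main:
  assumes k: "k \<ge> 1" and px: "\<And>j. is_x (p j)" and qx: "\<And>j. is_x (q j)"
  defines "P \<equiv> circuit_constraints k p q \<union> {mk_pbc [(1, Pos (T k))] 1}"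
  shows "\<exists>Ds. valid_deriv P Ds \<and> length Ds \<le> 17 * k \<and> sb_clauses k p q \<subseteq> P \<union> set Ds"
proof -
  define D1 where "D1 = block0 p q"
  define D2 where "D2 = concat (map (sblock p q) [1..<k-1])"
  define D3 where "D3 = tb p q k (k - 1)"
  define D4 where "D4 = [mk_pbc [(1, q 1), (1, neg_lit (p 1))] 1]"
  have C4: "mk_pbc [(4, Neg (T (j+1))), (3, Pos (T j)), (1, Neg (S j)), (1, q (j+1)), (1, neg_lit (p (j+1)))] 4 \<in> P"
    if "1 \<le> j" "j \<le> k - 1" for j
    unfolding P_def circuit_constraints_def
    apply (rule UnI1, rule UnI2, rule UN_I[where a=j]) using that by auto
  have TI: "valid_deriv P D3 \<and> mk_pbc [(1, Pos (T (k - (k-1))))] 1 \<in> P \<union> set D3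
     \<and> length D3 = 8 * (k-1)
     \<and> (\<forall>j. k - (k-1) \<le> j \<and> j \<le> k - 1 \<longrightarrow> mk_pbc [(1, Neg (S j)), (1, q (j+1)), (1, neg_lit (p (j+1)))] 1 \<in> set D3)"
    unfolding D3_def apply (rule tb_inv[OF k]) apply (simp add: P_def) apply (rule C4) by auto
  have kk: "k - (k - 1) = 1" using k by simp
  have v1: "valid_deriv P D1" unfolding D1_def
    by (rule block0_valid[OF px qx]) (auto simp: P_def circuit_constraints_def)
  have v2: "valid_deriv P D2" unfolding D2_def
  proof (rule vd_concat)
    fix j assume "j \<in> set [1..<k-1]"
    then have "j \<in> {1..k-2}" by auto
    then show "valid_deriv P (sblock p q j)"
      by (intro sblock_valid[OF px qx]) (auto simp: P_def circuit_constraints_def)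
  qed
  have v4: "valid_deriv (P \<union> set D3) D4" unfolding D4_def vd_Cons
  proof (intro conjI disjI2 vd_Nil)
    have m: "mk_pbc [(1, Neg (T 1)), (1, q 1), (1, neg_lit (p 1))] 1 \<in> P"
      unfolding P_def circuit_constraints_def by auto
    show "cp_step (P \<union> set D3) (mk_pbc [(1, q 1), (1, neg_lit (p 1))] 1)"
      apply (rule cp_add[OF memh[OF m] memh[of "mk_pbc [(1, Pos (T 1))] 1" "P \<union> set D3"]])
        apply blast using TI kk apply simp apply blast
      unfolding norm by (simp add: fun_eq_iff algebra_simps)
  qed
  have V: "valid_deriv P (D1 @ D2 @ D3 @ D4)"
  proof -
    have a: "valid_deriv (P \<union> set D1) D2" by (rule vd_mono[OF v2]) blast
    have b: "valid_deriv (P \<union> set D1 \<union> set D2) D3" by (rule vd_mono[OF TI[THEN conjunct1]]) blast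
    have c: "valid_deriv (P \<union> set D1 \<union> set D2 \<union> set D3) D4" by (rule vd_mono[OF v4]) blast
    show ?thesis using v1 a b c by (simp add: vd_append Un_assoc)
  qed
  have L: "length (D1 @ D2 @ D3 @ D4) \<le> 17 * k"
    using TI k by (simp add: D1_def D2_def D4_def block0_def len_concat_s)
  have SB: "sb_clauses k p q \<subseteq> P \<union> set (D1 @ D2 @ D3 @ D4)"
  proof -
    have a: "set (sblock p q j) \<subseteq> set D2" if "j \<in> {1..k-2}" for j
    proof -
      have "j \<in> set [1..<k-1]" using that by auto
      then show ?thesis unfolding D2_def by auto
    qed
    have s1: "set D1 \<subseteq> P \<union> set (D1 @ D2 @ D3 @ D4)" "set D2 \<subseteq> P \<union> set (D1 @ D2 @ D3 @ D4)"
      "set D3 \<subseteq> P \<union> set (D1 @ D2 @ D3 @ D4)" "set D4 \<subseteq> P \<union> set (D1 @ D2 @ D3 @ D4)" by auto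
    have c1: "mk_pbc [(1, Pos (S 1)), (1, neg_lit (p 1))] 1 \<in> set D1"
      "mk_pbc [(1, Pos (S 1)), (1, q 1)] 1 \<in> set D1" unfolding D1_def block0_def by simp_all
    have c2: "mk_pbc [(1, Pos (S (j+1))), (1, Neg (S j)), (1, neg_lit (p (j+1)))] 1 \<in> set D2"
       "mk_pbc [(1, Pos (S (j+1))), (1, Neg (S j)), (1, q (j+1))] 1 \<in> set D2"
      if "j \<in> {1..k-2}" for j
      using a[OF that] unfolding sblock_def by auto
    have c3: "mk_pbc [(1, Neg (S j)), (1, q (j+1)), (1, neg_lit (p (j+1)))] 1 \<in> set D3"
      if "j \<in> {1..k-1}" for j using TI[THEN conjunct2, THEN conjunct2, THEN conjunct2] kk that by simp
    have c4: "mk_pbc [(1, q 1), (1, neg_lit (p 1))] 1 \<in> set D4" unfolding D4_def by simp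
    have u2a: "(\<Union>j\<in>{1..k-2}. {mk_pbc [(1, Pos (S (j+1))), (1, Neg (S j)), (1, neg_lit (p (j+1)))] 1}) \<subseteq> set D2"
      using c2(1) by blast
    have u2b: "(\<Union>j\<in>{1..k-2}. {mk_pbc [(1, Pos (S (j+1))), (1, Neg (S j)), (1, q (j+1))] 1}) \<subseteq> set D2"
      using c2(2) by blast
    have u3: "(\<Union>j\<in>{1..k-1}. {mk_pbc [(1, Neg (S j)), (1, q (j+1)), (1, neg_lit (p (j+1)))] 1}) \<subseteq> set D3"
      using c3 by blast
    show ?thesis unfolding sb_clauses_def
      apply (intro Un_least)
      using s1(1) c1(1) apply blast
      using s1(2) u2a apply (rule order.trans[rotated])
      using s1(1) c1(2) apply blast
      using s1(2) u2b apply (rule order.trans[rotated])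
      using s1(4) c4 apply blast
      using s1(3) u3 by (rule order.trans[rotated])
  qed
  show ?thesis using V L SB by blast
qed
lemma is_x_map: "is_x (map_lit X l)" by (cases l) (auto simp: is_x_def)

theorem lemma17:
  "\<exists>c::nat. \<forall>(F :: nat pbc set) (\<sigma> :: nat lit \<Rightarrow> nat lit).
     pb_formula F \<longrightarrow> is_symmetry \<sigma> F \<longrightarrow> sym_support \<sigma> \<noteq> {} \<longrightarrow>
     (let xs = sorted_list_of_set (sym_support \<sigma>);
          k = length xs;
          p = (\<lambda>j. Pos (X (xs ! (j - 1))));
          q = (\<lambda>j. map_lit X (\<sigma> (Pos (xs ! (j - 1)))));
          P = circuit_constraints k p q \<union> {mk_pbc [(1, Pos (T k))] 1}
      in \<exists>Ds. valid_deriv P Ds \<and> length Ds \<le> c * k \<and> sb_clauses k p q \<subseteq> P \<union> set Ds)"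
proof (rule exI[of _ 17], intro allI impI)
  fix F :: "nat pbc set" and \<sigma> :: "nat lit \<Rightarrow> nat lit"
  assume "pb_formula F" "is_symmetry \<sigma> F" and ne: "sym_support \<sigma> \<noteq> {}"
  then have fin: "finite (sym_support \<sigma>)" by (simp add: is_symmetry_def)
  have k: "length (sorted_list_of_set (sym_support \<sigma>)) \<ge> 1"
  proof -
    have "set (sorted_list_of_set (sym_support \<sigma>)) \<noteq> {}" using fin ne by simp
    then show ?thesis by (cases "sorted_list_of_set (sym_support \<sigma>)") auto
  qed
  show "let xs = sorted_list_of_set (sym_support \<sigma>);
          k = length xs;
          p = (\<lambda>j. Pos (X (xs ! (j - 1))));
          q = (\<lambda>j. map_lit X (\<sigma> (Pos (xs ! (j - 1)))));
          P = circuit_constraints k p q \<union> {mk_pbc [(1, Pos (T k))] 1}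
      in \<exists>Ds. valid_deriv P Ds \<and> length Ds \<le> 17 * k \<and> sb_clauses k p q \<subseteq> P \<union> set Ds"
    unfolding Let_def
    apply (rule main[OF k])
     apply (simp add: is_x_def)
    by (rule is_x_map)
qed

end
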